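(* Let $(Y_1,\dots,Y_N)$ be multinomially distributed with $2N$ trials and $N$ categories each of probability $1/N$, and consider the random degree sequence $(d_i^-,d_i^+)_{i\in[N]}$ with $d_i^-=Y_i$ and $d_i^+=2$. Then there is a constant $K>0$ such that $$\mathbb{P}\{(d_i^-,d_i^+)_{i\in[N]}\text{ is proper}\}\to1\quad\text{as }N\to\infty.$$
   Context: For a degree sequence $(d_i^-,d_i^+)_{i\in[N]}$ with $d_i^+=2$ for all $i$, let $\xi_k^N=\frac1N\#\{i: d_i^-=k\}$ and let $\Delta^N$ be the maximal in- or out-degree. Such a sequence is called proper (with constant $K>0$, not depending on $N$) if (C1) $\sum_{k}k^2\xi_k^N\le K$ and (C2) $\Delta^N\le N^{1/12}/\log N$. *)

theory Defs
  imports "HOL-Probability.Probability"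
begin

text \<open>Multinomial distribution with 2N trials and N equiprobable categories,
realised as the law of the occupation counts of 2N balls thrown independently
and uniformly into the N bins 0..N-1. The result is a count vector
Y :: nat => nat (Y i = number of balls in bin i, for i < N; Y i = 0 otherwise).\<close>
definition multinomial_2N :: "nat \<Rightarrow> (nat \<Rightarrow> nat) pmf" where
  "multinomial_2N N =
     map_pmf (\<lambda>f i. card {j \<in> {0..<2*N}. f j = i})
       (pmf_of_set (PiE {0..<2*N} (\<lambda>_. {0..<N})))"

definition xi :: "nat \<Rightarrow> (nat \<Rightarrow> nat) \<Rightarrow> nat \<Rightarrow> real" where
  "xi N din k = real (card {i \<in> {0..<N}. din i = k}) / real N"

definition maxdeg :: "nat \<Rightarrow> (nat \<Rightarrow> nat) \<Rightarrow> (nat \<Rightarrow> nat) \<Rightarrow> nat" where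
  "maxdeg N din dout = Max (din ` {0..<N} \<union> dout ` {0..<N} \<union> {0})"

text \<open>Properness with constant K: (C1) sum_k k^2 xi_k <= K (the sum ranges over
the finitely many k with xi_k possibly nonzero), (C2) Delta <= N^(1/12)/log N.\<close>
definition proper :: "real \<Rightarrow> nat \<Rightarrow> (nat \<Rightarrow> nat) \<Rightarrow> (nat \<Rightarrow> nat) \<Rightarrow> bool" where
  "proper K N din dout \<longleftrightarrow>
     (\<Sum>k\<in>din ` {0..<N}. real k ^ 2 * xi N din k) \<le> K \<and>
     real (maxdeg N din dout) \<le> real N powr (1/12) / ln (real N)"

end

theory Submission
  imports Defs "HOL-Probability.Probability" "HOL-Real_Asymp.Real_Asymp"
begin


lemma card_partition_sum:
  assumes "finite A" "finite B" "g ` A \<subseteq> B"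
  shows "card A = (\<Sum>y\<in>B. card {x\<in>A. g x = y})"
proof -
  have "A = (\<Union>y\<in>B. {x\<in>A. g x = y})" using assms by auto
  hence "card A = card (\<Union>y\<in>B. {x\<in>A. g x = y})" by simp
  also have "\<dots> = (\<Sum>y\<in>B. card {x\<in>A. g x = y})"
    by (rule card_UN_disjoint) (use assms in auto)
  finally show ?thesis .
qed

lemma card_fix:
  fixes I :: "nat set" and N :: nat
  assumes I: "finite I" "a \<in> I" and x: "x < N"
    and inv: "\<And>f y. f \<in> PiE I (\<lambda>_. {0..<N}) \<Longrightarrow> y < N \<Longrightarrow> Q (f(a:=y)) = Q f"
  shows "card {f \<in> PiE I (\<lambda>_. {0..<N}). Q f} = N * card {f \<in> PiE I (\<lambda>_. {0..<N}). Q f \<and> f a = x}"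
proof -
  let ?O = "PiE I (\<lambda>_. {0..<N})"
  have upd: "f(a:=y) \<in> ?O" if "f \<in> ?O" "y < N" for f y
    using PiE_fun_upd[of y "\<lambda>_. {0..<N}" a f I] that I by (simp add: insert_absorb)
  have eq: "card {f \<in> ?O. Q f \<and> f a = y} = card {f \<in> ?O. Q f \<and> f a = x}" if y: "y < N" for y
  proof (rule bij_betw_same_card[of "\<lambda>f. f(a:=x)"], rule bij_betw_byWitness[of _ "\<lambda>f. f(a:=y)"])
    show "\<forall>f\<in>{f \<in> ?O. Q f \<and> f a = y}. f(a := x, a := y) = f" by auto
    show "\<forall>f\<in>{f \<in> ?O. Q f \<and> f a = x}. f(a := y, a := x) = f" by auto
    show "(\<lambda>f. f(a := x)) ` {f \<in> ?O. Q f \<and> f a = y} \<subseteq> {f \<in> ?O. Q f \<and> f a = x}"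
      using upd inv x by auto
    show "(\<lambda>f. f(a := y)) ` {f \<in> ?O. Q f \<and> f a = x} \<subseteq> {f \<in> ?O. Q f \<and> f a = y}"
      using upd inv y by auto
  qed
  have "card {f \<in> ?O. Q f} = (\<Sum>y\<in>{0..<N}. card {f\<in>{f \<in> ?O. Q f}. f a = y})"
    by (rule card_partition_sum) (use I in \<open>auto simp: finite_PiE\<close>)
  also have "\<dots> = (\<Sum>y\<in>{0..<N}. card {f \<in> ?O. Q f \<and> f a = x})"
    by (rule sum.cong) (auto simp: eq[symmetric] conj_assoc)
  finally show ?thesis by simp
qed

lemma card_pair:
  fixes I :: "nat set" and N :: nat
  assumes I: "finite I" "a \<in> I" "b \<in> I" "a \<noteq> b"
    and inv: "\<And>f y. f \<in> PiE I (\<lambda>_. {0..<N}) \<Longrightarrow> y < N \<Longrightarrow> Q (f(a:=y)) = Q f"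
  shows "N * card {f \<in> PiE I (\<lambda>_. {0..<N}). Q f \<and> f a = f b} = card {f \<in> PiE I (\<lambda>_. {0..<N}). Q f}"
proof -
  let ?O = "PiE I (\<lambda>_. {0..<N})"
  have fin: "finite ?O" using I by (simp add: finite_PiE)
  have "card {f \<in> ?O. Q f \<and> f a = f b} = (\<Sum>y\<in>{0..<N}. card {f\<in>{f \<in> ?O. Q f \<and> f a = f b}. f b = y})"
    by (rule card_partition_sum) (use fin in simp, simp, use I in \<open>auto simp: PiE_iff\<close>)
  also have "\<dots> = (\<Sum>y\<in>{0..<N}. card {f \<in> ?O. (Q f \<and> f b = y) \<and> f a = y})"
    by (intro sum.cong refl arg_cong[where f=card]) auto
  finally have "N * card {f \<in> ?O. Q f \<and> f a = f b} = (\<Sum>y\<in>{0..<N}. N * card {f \<in> ?O. (Q f \<and> f b = y) \<and> f a = y})"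
    by (simp add: sum_distrib_left)
  also have "\<dots> = (\<Sum>y\<in>{0..<N}. card {f \<in> ?O. Q f \<and> f b = y})"
    by (rule sum.cong[OF refl], subst card_fix[of I a _ N "\<lambda>f. Q f \<and> f _ = _"]) (use I inv in auto)
  also have "\<dots> = (\<Sum>y\<in>{0..<N}. card {f\<in>{f \<in> ?O. Q f}. f b = y})"
    by (intro sum.cong refl arg_cong[where f=card]) auto
  also have "\<dots> = card {f \<in> ?O. Q f}"
    by (rule card_partition_sum[symmetric]) (use fin in simp, simp, use I in \<open>auto simp: PiE_iff\<close>)
  finally show ?thesis .
qed

lemma card_all_eq:
  fixes I :: "nat set" and N :: nat
  assumes I: "finite I" "T \<subseteq> I" and i: "i < N"
  shows "N ^ card T * card {f \<in> PiE I (\<lambda>_. {0..<N}). \<forall>j\<in>T. f j = i} = card (PiE I (\<lambda>_. {0..<N}))"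
proof -
  have "finite T" using I finite_subset by blast
  thus ?thesis using I(2)
  proof (induction T rule: finite_induct)
    case empty then show ?case by simp
  next
    case (insert a T)
    have "card {f \<in> PiE I (\<lambda>_. {0..<N}). \<forall>j\<in>T. f j = i}
        = N * card {f \<in> PiE I (\<lambda>_. {0..<N}). (\<forall>j\<in>T. f j = i) \<and> f a = i}"
      by (rule card_fix) (use I i insert in auto)
    also have "{f \<in> PiE I (\<lambda>_. {0..<N}). (\<forall>j\<in>T. f j = i) \<and> f a = i} = {f \<in> PiE I (\<lambda>_. {0..<N}). \<forall>j\<in>insert a T. f j = i}"
      by auto
    finally show ?case using insert by (simp add: mult.left_commute)
  qed
qed

lemma card_two_pairs:
  fixes I :: "nat set" and N :: nat
  assumes I: "finite I" and p: "a \<in> I" "b \<in> I" "a \<noteq> b" and q: "c \<in> I" "d \<in> I" "c \<noteq> d"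
    and ne: "(c,d) \<noteq> (a,b)" "(c,d) \<noteq> (b,a)"
  shows "N * (N * card {f \<in> PiE I (\<lambda>_. {0..<N}). f a = f b \<and> f c = f d}) = card (PiE I (\<lambda>_. {0..<N}))"
proof -
  let ?O = "PiE I (\<lambda>_. {0..<N})"
  have base: "N * card {f \<in> ?O. True \<and> f a = f b} = card {f \<in> ?O. True}"
    by (rule card_pair) (use I p in auto)
  have "c \<notin> {a,b} \<or> d \<notin> {a,b}" using ne q p by auto
  thus ?thesis
  proof
    assume c: "c \<notin> {a,b}"
    have "N * card {f \<in> ?O. f a = f b \<and> f c = f d} = card {f \<in> ?O. f a = f b}"
      by (rule card_pair) (use I q c in auto)
    thus ?thesis using base by simp
  next
    assume d: "d \<notin> {a,b}"
    have "N * card {f \<in> ?O. f a = f b \<and> f d = f c} = card {f \<in> ?O. f a = f b}"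
      by (rule card_pair) (use I q d in auto)
    moreover have "{f \<in> ?O. f a = f b \<and> f d = f c} = {f \<in> ?O. f a = f b \<and> f c = f d}" by auto
    ultimately show ?thesis using base by simp
  qed
qed

definition Dp :: "nat set \<Rightarrow> (nat \<Rightarrow> nat) \<Rightarrow> real" where
  "Dp I f = (\<Sum>p\<in>{p\<in>I\<times>I. fst p \<noteq> snd p}. of_bool (f (fst p) = f (snd p)))"

lemma second_moment:
  fixes I :: "nat set" and N :: nat
  assumes I: "finite I" and N: "N > 0"
  defines "Om \<equiv> PiE I (\<lambda>_. {0..<N})" and "M \<equiv> real (card {p\<in>I\<times>I. fst p \<noteq> snd p})"
  shows "(\<Sum>f\<in>Om. (Dp I f - M / N)^2) \<le> 2 * M * card Om / N"
proof -
  define P where "P = {p\<in>I\<times>I. fst p \<noteq> snd p}"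
  have finO: "finite Om" using I by (simp add: Om_def finite_PiE)
  have finP: "finite P" using I by (simp add: P_def)
  define cO where "cO = real (card Om)"
  have one: "real (card {f\<in>Om. f (fst p) = f (snd p)}) = cO / N" if "p \<in> P" for p
  proof -
    have "N * card {f \<in> Om. True \<and> f (fst p) = f (snd p)} = card {f \<in> Om. True}"
      unfolding Om_def by (rule card_pair) (use I that in \<open>auto simp: P_def\<close>)
    hence "real N * real (card {f\<in>Om. f (fst p) = f (snd p)}) = cO"
      unfolding cO_def by (simp flip: of_nat_mult)
    thus ?thesis using N by (simp add: field_simps)
  qed
  have two: "real (card {f\<in>Om. f (fst p) = f (snd p) \<and> f (fst q) = f (snd q)}) = cO / N^2"
    if "p \<in> P" "q \<in> P" "q \<noteq> p" "q \<noteq> prod.swap p" for p q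
  proof -
    obtain a b c d where pq: "p = (a,b)" "q = (c,d)" by force
    have "N * (N * card {f \<in> Om. f a = f b \<and> f c = f d}) = card Om"
      unfolding Om_def by (rule card_two_pairs) (use I that pq in \<open>auto simp: P_def\<close>)
    hence "real N * (real N * real (card {f \<in> Om. f a = f b \<and> f c = f d})) = cO"
      unfolding cO_def by (simp flip: of_nat_mult)
    hence "real (card {f \<in> Om. f a = f b \<and> f c = f d}) = cO / (real N * real N)"
      using N by (simp add: eq_divide_eq mult.assoc mult.commute)
    thus ?thesis using pq by (simp add: power2_eq_square)
  qed
  have ind: "(\<Sum>f\<in>Om. of_bool (Q f) :: real) = real (card {f\<in>Om. Q f})" for Q
    using finO by (simp add: sum_of_bool_eq Int_def)
  have S1: "(\<Sum>f\<in>Om. Dp I f) = M * cO / N"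
  proof -
    have "(\<Sum>f\<in>Om. Dp I f) = (\<Sum>p\<in>P. \<Sum>f\<in>Om. of_bool (f (fst p) = f (snd p)))"
      unfolding Dp_def P_def by (rule sum.swap)
    also have "\<dots> = (\<Sum>p\<in>P. cO / N)" using one by (simp add: ind)
    finally show ?thesis by (simp add: M_def P_def)
  qed
  have inner: "(\<Sum>q\<in>P. real (card {f\<in>Om. f (fst p) = f (snd p) \<and> f (fst q) = f (snd q)}))
      = 2 * cO / N + (M - 2) * cO / N^2" if p: "p \<in> P" for p
  proof -
    let ?g = "\<lambda>q. real (card {f\<in>Om. f (fst p) = f (snd p) \<and> f (fst q) = f (snd q)})"
    have sp: "prod.swap p \<in> P" "prod.swap p \<noteq> p" using p by (auto simp: P_def)
    have "sum ?g P = ?g p + sum ?g (P - {p})" using finP p by (simp add: sum.remove)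
    also have "sum ?g (P - {p}) = ?g (prod.swap p) + sum ?g (P - {p} - {prod.swap p})"
      using finP sp by (simp add: sum.remove)
    also have "sum ?g (P - {p} - {prod.swap p}) = sum (\<lambda>_. cO / N^2) (P - {p} - {prod.swap p})"
      by (rule sum.cong) (use two p in auto)
    also have "\<dots> = (M - 2) * cO / N^2"
    proof -
      have "card {p, prod.swap p} \<le> card P" by (rule card_mono) (use finP p sp in auto)
      hence "2 \<le> card P" using sp by simp
      thus ?thesis using finP p sp by (simp add: M_def P_def[symmetric] card_Diff_subset of_nat_diff)
    qed
    also have "?g p = cO / N" using one[OF p] by simp
    also have "?g (prod.swap p) = cO / N"
    proof -
      have "{f\<in>Om. f (fst p) = f (snd p) \<and> f (fst (prod.swap p)) = f (snd (prod.swap p))} = {f\<in>Om. f (fst p) = f (snd p)}"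
        by auto
      thus ?thesis using one[OF p] by simp
    qed
    finally show ?thesis by simp
  qed
  have S2: "(\<Sum>f\<in>Om. (Dp I f)^2) = M * (2 * cO / N + (M - 2) * cO / N^2)"
  proof -
    have "(\<Sum>f\<in>Om. (Dp I f)^2) = (\<Sum>f\<in>Om. \<Sum>p\<in>P. \<Sum>q\<in>P. of_bool (f (fst p) = f (snd p) \<and> f (fst q) = f (snd q)))"
      unfolding Dp_def P_def[symmetric] power2_eq_square sum_product of_bool_conj by (rule refl)
    also have "\<dots> = (\<Sum>p\<in>P. \<Sum>q\<in>P. \<Sum>f\<in>Om. of_bool (f (fst p) = f (snd p) \<and> f (fst q) = f (snd q)))"
      by (subst sum.swap, subst (2) sum.swap) simp
    also have "\<dots> = (\<Sum>p\<in>P. 2 * cO / N + (M - 2) * cO / N^2)"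
      using inner by (simp add: ind)
    finally show ?thesis by (simp add: M_def P_def)
  qed
  have "(\<Sum>f\<in>Om. (Dp I f - M / N)^2) = (\<Sum>f\<in>Om. (Dp I f)^2) - 2 * (M/N) * (\<Sum>f\<in>Om. Dp I f) + (M/N)^2 * cO"
  proof -
    have "(\<Sum>f\<in>Om. (Dp I f - M / N)^2) = (\<Sum>f\<in>Om. (Dp I f)^2 - (2 * (M/N)) * Dp I f + (M/N)^2)"
      by (rule sum.cong) (simp_all add: power2_diff algebra_simps)
    also have "\<dots> = (\<Sum>f\<in>Om. (Dp I f)^2) - (2 * (M/N)) * (\<Sum>f\<in>Om. Dp I f) + (M/N)^2 * cO"
      by (simp add: sum.distrib sum_subtractf sum_distrib_left cO_def)
    finally show ?thesis .
  qed
  also have "\<dots> = 2 * M * cO / N - 2 * M * cO / N^2"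
    unfolding S1 S2 using N by (simp add: field_simps power2_eq_square)
  also have "\<dots> \<le> 2 * M * cO / N"
    by (simp add: M_def cO_def)
  finally show ?thesis by (simp add: cO_def)
qed



lemma lim1: "(\<lambda>N. 16 * real N / 2 powr (real N powr (1/12) / ln (real N))) \<longlonglongrightarrow> 0"
  by real_asymp

lemma ev1: "eventually (\<lambda>N. 2 \<le> real N powr (1/12) / ln (real N)) sequentially"
  by real_asymp

lemma fact4: "(4::real)^m \<le> 16 * fact m"
proof (induction m)
  case 0 then show ?case by simp
next
  case (Suc m)
  show ?case
  proof (cases "m \<le> 2")
    case True
    then have "m = 0 \<or> m = 1 \<or> m = 2" by auto
    then show ?thesis by (auto simp: fact_numeral)
  next
    case False
    have "(4::real)^Suc m = 4 * 4^m" by simp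
    also have "\<dots> \<le> 4 * (16 * fact m)" using Suc by simp
    also have "\<dots> \<le> real (Suc m) * (16 * fact m)"
      using False by (intro mult_right_mono) auto
    also have "\<dots> = 16 * fact (Suc m)" by (simp add: fact_Suc)
    finally show ?thesis .
  qed
qed



lemma sumsq:
  fixes I :: "nat set" and N :: nat
  assumes I: "finite I" and f: "f \<in> PiE I (\<lambda>_. {0..<N})"
  shows "(\<Sum>i\<in>{0..<N}. real (card {j\<in>I. f j = i}) ^ 2) = real (card I) + Dp I f"
proof -
  have c: "real (card {j\<in>I. f j = i}) = (\<Sum>a\<in>I. of_bool (f a = i))" for i
    using I by (simp add: sum_of_bool_eq Int_def)
  have fa: "f a < N" if "a \<in> I" for a using f that by (auto simp: PiE_iff)
  have "(\<Sum>i\<in>{0..<N}. real (card {j\<in>I. f j = i}) ^ 2)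
      = (\<Sum>i\<in>{0..<N}. \<Sum>a\<in>I. \<Sum>b\<in>I. of_bool (f a = i) * of_bool (f b = i))"
    unfolding c power2_eq_square sum_product by simp
  also have "\<dots> = (\<Sum>a\<in>I. \<Sum>b\<in>I. \<Sum>i\<in>{0..<N}. of_bool (f a = i) * of_bool (f b = i))"
    by (subst sum.swap, subst (2) sum.swap) simp
  also have "\<dots> = (\<Sum>a\<in>I. \<Sum>b\<in>I. of_bool (f a = f b))"
  proof (intro sum.cong refl)
    fix a b assume a: "a \<in> I" and b: "b \<in> I"
    have "(\<Sum>i\<in>{0..<N}. of_bool (f a = i) * of_bool (f b = i) :: real)
        = (\<Sum>i\<in>{0..<N}. if i = f a then of_bool (f b = f a) else 0)"
      by (rule sum.cong) auto
    also have "\<dots> = of_bool (f a = f b)" using fa[OF a] by (auto simp: sum.delta')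
    finally show "(\<Sum>i\<in>{0..<N}. of_bool (f a = i) * of_bool (f b = i) :: real) = of_bool (f a = f b)" .
  qed
  also have "\<dots> = (\<Sum>a\<in>I. 1 + (\<Sum>b\<in>I - {a}. of_bool (f a = f b)))"
  proof (intro sum.cong refl)
    fix a assume a: "a \<in> I"
    show "(\<Sum>b\<in>I. of_bool (f a = f b)) = (1::real) + (\<Sum>b\<in>I - {a}. of_bool (f a = f b))"
      by (subst sum.remove[OF I a]) simp
  qed
  also have "\<dots> = real (card I) + (\<Sum>a\<in>I. \<Sum>b\<in>I - {a}. of_bool (f a = f b))"
    by (simp add: sum.distrib)
  also have "(\<Sum>a\<in>I. \<Sum>b\<in>I - {a}. of_bool (f a = f b)) = Dp I f"
  proof -
    have "{p\<in>I\<times>I. fst p \<noteq> snd p} = Sigma I (\<lambda>a. I - {a})" by auto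
    have "(\<Sum>a\<in>I. \<Sum>b\<in>I - {a}. of_bool (f a = f b) :: real) = (\<Sum>(a,b)\<in>Sigma I (\<lambda>a. I - {a}). of_bool (f a = f b))"
      by (rule sum.Sigma) (use I in auto)
    also have "\<dots> = (\<Sum>p\<in>Sigma I (\<lambda>a. I - {a}). of_bool (f (fst p) = f (snd p)))"
      by (rule sum.cong) auto
    finally show ?thesis unfolding Dp_def \<open>{p\<in>I\<times>I. fst p \<noteq> snd p} = Sigma I (\<lambda>a. I - {a})\<close> .
  qed
  finally show ?thesis .
qed



lemma c1_sum:
  fixes Y :: "nat \<Rightarrow> nat"
  shows "(\<Sum>k\<in>Y ` {0..<N}. real k ^ 2 * xi N Y k) = (\<Sum>i\<in>{0..<N}. real (Y i) ^ 2) / N"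
proof -
  have "(\<Sum>i\<in>{0..<N}. real (Y i) ^ 2) / N = (\<Sum>i\<in>{0..<N}. real (Y i) ^ 2 / N)"
    by (simp add: sum_divide_distrib)
  also have "\<dots> = (\<Sum>k\<in>Y ` {0..<N}. \<Sum>i\<in>{i\<in>{0..<N}. Y i = k}. real (Y i) ^ 2 / N)"
    by (rule sum.image_gen) simp
  also have "\<dots> = (\<Sum>k\<in>Y ` {0..<N}. real k ^ 2 * xi N Y k)"
  proof (rule sum.cong[OF refl])
    fix k
    have "(\<Sum>i\<in>{i\<in>{0..<N}. Y i = k}. real (Y i) ^ 2 / N) = (\<Sum>i\<in>{i\<in>{0..<N}. Y i = k}. real k ^ 2 / N)"
      by (rule sum.cong) auto
    also have "\<dots> = real k ^ 2 * xi N Y k" by (simp add: xi_def)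
    finally show "(\<Sum>i\<in>{i\<in>{0..<N}. Y i = k}. real (Y i) ^ 2 / N) = real k ^ 2 * xi N Y k" .
  qed
  finally show ?thesis by simp
qed

lemma maxdeg_le:
  fixes Y :: "nat \<Rightarrow> nat"
  assumes "2 \<le> x" "\<And>i. i < N \<Longrightarrow> real (Y i) \<le> x"
  shows "real (maxdeg N Y (\<lambda>_. 2)) \<le> x"
proof -
  let ?S = "Y ` {0..<N} \<union> (\<lambda>_. 2::nat) ` {0..<N} \<union> {0}"
  have "finite ?S" "?S \<noteq> {}" by auto
  hence "Max ?S \<in> ?S" by (rule Max_in)
  thus ?thesis unfolding maxdeg_def using assms by auto
qed



lemma prob_bound:
  fixes N :: nat
  assumes N: "N > 0" and x2: "2 \<le> real N powr (1/12) / ln (real N)"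
  shows "1 - 8 / real N - 16 * real N / 2 powr (real N powr (1/12) / ln (real N))
         \<le> measure_pmf.prob (multinomial_2N N) {Y. proper 7 N Y (\<lambda>_. 2)}"
proof -
  define x where "x = real N powr (1/12) / ln (real N)"
  define m where "m = nat \<lfloor>x\<rfloor> + 1"
  define I where "I = {0..<2*N}"
  define Om where "Om = PiE I (\<lambda>_. {0..<N})"
  define Yf where "Yf = (\<lambda>(f::nat\<Rightarrow>nat) (i::nat). card {j \<in> I. f j = i})"
  define M where "M = real (card {p\<in>I\<times>I. fst p \<noteq> snd p})"
  define B1 where "B1 = {f\<in>Om. M/N + N \<le> Dp I f}"
  define B2 where "B2 = {f\<in>Om. \<exists>i<N. m \<le> Yf f i}"
  define G where "G = Om \<inter> {f. proper 7 N (Yf f) (\<lambda>_. 2)}"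
  define cO where "cO = real (card Om)"
  have x2': "2 \<le> x" using x2 by (simp add: x_def)
  have finI: "finite I" by (simp add: I_def)
  have finO: "finite Om" by (simp add: Om_def I_def finite_PiE)
  have cardO: "card Om = N ^ (2*N)" by (simp add: Om_def I_def card_PiE)
  have cOpos: "cO > 0" using N by (simp add: cO_def cardO)
  hence One: "Om \<noteq> {}" by (auto simp: cO_def)
  have cardI: "card I = 2*N" by (simp add: I_def)
  have M4: "M \<le> 4 * real N ^ 2"
  proof -
    have "card {p\<in>I\<times>I. fst p \<noteq> snd p} \<le> card (I \<times> I)" by (rule card_mono) (use finI in auto)
    also have "\<dots> = (2*N)*(2*N)" by (simp add: card_cartesian_product cardI)
    finally show ?thesis unfolding M_def by (simp add: power2_eq_square) (metis of_nat_le_iff of_nat_mult of_nat_numeral)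
  qed
  have prob: "measure_pmf.prob (multinomial_2N N) {Y. proper 7 N Y (\<lambda>_. 2)} = real (card G) / cO"
    unfolding multinomial_2N_def measure_map_pmf
    by (subst measure_pmf_of_set) (use One finO in \<open>auto simp: Om_def I_def G_def Yf_def cO_def vimage_def\<close>)
  have good: "Om - B1 - B2 \<subseteq> G"
  proof
    fix f assume f: "f \<in> Om - B1 - B2"
    hence fO: "f \<in> Om" and d: "Dp I f < M/N + N" and y: "\<And>i. i < N \<Longrightarrow> Yf f i < m"
      by (auto simp: B1_def B2_def not_le)
    have sq: "(\<Sum>i\<in>{0..<N}. real (Yf f i) ^ 2) = 2 * N + Dp I f"
      using sumsq[OF finI fO[unfolded Om_def]] by (simp add: Yf_def cardI)
    have "M / N \<le> 4 * N" using M4 N by (simp add: divide_le_eq power2_eq_square mult.assoc)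
    hence "Dp I f \<le> 5 * N" using d by linarith
    hence "(\<Sum>i\<in>{0..<N}. real (Yf f i) ^ 2) / N \<le> 7"
      using sq N by (simp add: divide_le_eq)
    hence c1: "(\<Sum>k\<in>Yf f ` {0..<N}. real k ^ 2 * xi N (Yf f) k) \<le> 7" by (simp add: c1_sum)
    have "real (Yf f i) \<le> x" if "i < N" for i
    proof -
      have "Yf f i \<le> nat \<lfloor>x\<rfloor>" using y[OF that] by (simp add: m_def)
      hence "real (Yf f i) \<le> real (nat \<lfloor>x\<rfloor>)" by simp
      also have "\<dots> \<le> x" using x2' by linarith
      finally show ?thesis .
    qed
    hence c2: "real (maxdeg N (Yf f) (\<lambda>_. 2)) \<le> x" by (intro maxdeg_le x2')
    show "f \<in> G" using fO c1 c2 by (simp add: G_def proper_def x_def)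
  qed
  have cardG: "cO - real (card B1) - real (card B2) \<le> real (card G)"
  proof -
    have "Om \<subseteq> (Om - B1 - B2) \<union> B1 \<union> B2" by auto
    hence "card Om \<le> card ((Om - B1 - B2) \<union> B1 \<union> B2)" by (rule card_mono[rotated]) (use finO in \<open>auto simp: B1_def B2_def\<close>)
    also have "\<dots> \<le> card (Om - B1 - B2) + card B1 + card B2" by (meson card_Un_le add_le_mono1 le_trans)
    also have "card (Om - B1 - B2) \<le> card G" by (rule card_mono) (use finO good in \<open>auto simp: G_def\<close>)
    finally show ?thesis unfolding cO_def by linarith
  qed
  have B1: "real (card B1) \<le> 8 * cO / N"
  proof -
    have sm: "(\<Sum>f\<in>Om. (Dp I f - M / N)^2) \<le> 2 * M * cO / N"
      using second_moment[OF finI N] by (simp add: Om_def M_def cO_def)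
    have "real (card B1) * (real N)^2 = (\<Sum>f\<in>B1. (real N)^2)" by simp
    also have "\<dots> \<le> (\<Sum>f\<in>B1. (Dp I f - M / N)^2)"
    proof (rule sum_mono)
      fix f assume "f \<in> B1"
      hence "real N \<le> Dp I f - M / N" by (simp add: B1_def)
      thus "(real N)^2 \<le> (Dp I f - M / N)^2" by (intro power_mono) auto
    qed
    also have "\<dots> \<le> (\<Sum>f\<in>Om. (Dp I f - M / N)^2)"
      by (rule sum_mono2) (use finO in \<open>auto simp: B1_def\<close>)
    also have "\<dots> \<le> 2 * M * cO / N" by (rule sm)
    also have "\<dots> \<le> 2 * (4 * real N ^ 2) * cO / N"
      using M4 cOpos by (intro divide_right_mono mult_right_mono mult_left_mono) auto
    finally have h: "real (card B1) * (real N)^2 \<le> 2 * (4 * real N ^ 2) * cO / N" .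
    have "2 * (4 * real N ^ 2) * cO / N = (8 * cO / N) * (real N)^2" by (simp add: field_simps)
    with h have "real (card B1) * (real N)^2 \<le> (8 * cO / N) * (real N)^2" by (simp only:)
    thus ?thesis by (rule mult_right_le_imp_le) (use N in simp)
  qed
  have B2: "real (card B2) \<le> real N * real ((2*N) choose m) * cO / real N ^ m"
  proof -
    let ?T = "{T. T \<subseteq> I \<and> card T = m}"
    have sub: "B2 \<subseteq> (\<Union>i\<in>{0..<N}. \<Union>T\<in>?T. {f\<in>Om. \<forall>j\<in>T. f j = i})"
    proof
      fix f assume "f \<in> B2"
      then obtain i where fO: "f \<in> Om" and i: "i < N" and mi: "m \<le> card {j \<in> I. f j = i}"
        by (auto simp: B2_def Yf_def)
      obtain T where Ts: "T \<subseteq> {j \<in> I. f j = i}" and Tc: "card T = m"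
        using obtain_subset_with_card_n[OF mi] by metis
      have T: "T \<in> ?T" using Ts Tc by auto
      have mem: "f \<in> {f\<in>Om. \<forall>j\<in>T. f j = i}" using Ts fO by auto
      show "f \<in> (\<Union>i\<in>{0..<N}. \<Union>T\<in>?T. {f\<in>Om. \<forall>j\<in>T. f j = i})"
        apply (rule UN_I[where a=i])
        using i apply simp
        apply (rule UN_I[OF T])
        using mem by simp
    qed
    have eachT: "real (card {f\<in>Om. \<forall>j\<in>T. f j = i}) = cO / real N ^ m" if "T \<in> ?T" "i < N" for T i
    proof -
      have "N ^ card T * card {f\<in>Om. \<forall>j\<in>T. f j = i} = card Om"
        unfolding Om_def by (rule card_all_eq) (use finI that in auto)
      hence "real N ^ m * real (card {f\<in>Om. \<forall>j\<in>T. f j = i}) = cO"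
        using that unfolding cO_def by (metis (mono_tags, lifting) mem_Collect_eq of_nat_mult of_nat_power)
      thus ?thesis using N by (simp add: field_simps)
    qed
    have finT: "finite ?T" using finI by simp
    have "card B2 \<le> card (\<Union>i\<in>{0..<N}. \<Union>T\<in>?T. {f\<in>Om. \<forall>j\<in>T. f j = i})"
      by (rule card_mono[OF _ sub]) (use finO finT in auto)
    also have "\<dots> \<le> (\<Sum>i\<in>{0..<N}. card (\<Union>T\<in>?T. {f\<in>Om. \<forall>j\<in>T. f j = i}))" by (rule card_UN_le) simp
    also have "\<dots> \<le> (\<Sum>i\<in>{0..<N}. \<Sum>T\<in>?T. card {f\<in>Om. \<forall>j\<in>T. f j = i})"
      by (intro sum_mono card_UN_le finT)
    finally have "real (card B2) \<le> real (\<Sum>i\<in>{0..<N}. \<Sum>T\<in>?T. card {f\<in>Om. \<forall>j\<in>T. f j = i})"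
      by (simp only: of_nat_le_iff)
    also have "\<dots> = (\<Sum>i\<in>{0..<N}. \<Sum>T\<in>?T. real (card {f\<in>Om. \<forall>j\<in>T. f j = i}))"
      by (simp only: of_nat_sum)
    also have "\<dots> = (\<Sum>i\<in>{0..<N}. \<Sum>T\<in>?T. cO / real N ^ m)"
      by (intro sum.cong refl) (use eachT in auto)
    also have "\<dots> = real N * real ((2*N) choose m) * (cO / real N ^ m)"
      using n_subsets[OF finI, of m] by (simp add: cardI)
    finally show ?thesis by simp
  qed
  have bin: "real N * real ((2*N) choose m) * cO / real N ^ m \<le> 16 * real N / 2 powr x * cO"
  proof -
    have "real ((2*N) choose m) * fact m \<le> real (2*N) ^ m"
      using binomial_fact_pow[of "2*N" m] by (metis of_nat_fact of_nat_le_iff of_nat_mult of_nat_power)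
    hence b1: "real ((2*N) choose m) \<le> (2 * real N) ^ m / fact m" by (simp add: field_simps)
    have "real ((2*N) choose m) / real N ^ m \<le> 2 ^ m / fact m"
      using b1 N by (simp add: divide_simps power_mult_distrib mult.commute)
    also have "\<dots> \<le> 16 / 2 ^ m"
    proof -
      have "(4::real)^m \<le> 16 * fact m" by (rule fact4)
      hence "2^m * 2^m \<le> 16 * (fact m :: real)" by (simp add: power_mult_distrib[symmetric])
      thus ?thesis by (simp add: divide_simps)
    qed
    also have "\<dots> \<le> 16 / 2 powr x"
    proof -
      have "x \<le> real m" unfolding m_def using x2' by linarith
      hence "2 powr x \<le> 2 powr real m" by simp
      hence "2 powr x \<le> 2 ^ m" by (simp add: powr_realpow)
      thus ?thesis by (intro divide_left_mono) auto
    qed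
    finally have "real ((2*N) choose m) / real N ^ m \<le> 16 / 2 powr x" .
    hence "real N * (real ((2*N) choose m) / real N ^ m) * cO \<le> real N * (16 / 2 powr x) * cO"
      using cOpos by (intro mult_right_mono mult_left_mono) auto
    thus ?thesis by (simp add: field_simps)
  qed
  have "1 - 8 / real N - 16 * real N / 2 powr x \<le> real (card G) / cO"
  proof -
    have "(1 - 8 / real N - 16 * real N / 2 powr x) * cO = cO - 8 * cO / N - 16 * real N / 2 powr x * cO"
      by (simp add: algebra_simps)
    also have "\<dots> \<le> real (card G)" using cardG B1 B2 bin by linarith
    finally show ?thesis using cOpos by (simp add: le_divide_eq)
  qed
  thus ?thesis unfolding prob x_def .
qed


theorem lemma4p2:
  shows "\<exists>K>0. (\<lambda>N. measure_pmf.prob (multinomial_2N N)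
                      {Y. proper K N Y (\<lambda>_. 2)}) \<longlonglongrightarrow> 1"
proof (intro exI[of _ 7] conjI)
  show "(7::real) > 0" by simp
  have a: "(\<lambda>N. 8 / real N) \<longlonglongrightarrow> 0" by real_asymp
  have l: "(\<lambda>N. 1 - 8 / real N - 16 * real N / 2 powr (real N powr (1/12) / ln (real N))) \<longlonglongrightarrow> 1"
    using tendsto_diff[OF tendsto_diff[OF tendsto_const a] lim1] by simp
  have ev: "eventually (\<lambda>N. 1 - 8 / real N - 16 * real N / 2 powr (real N powr (1/12) / ln (real N))
      \<le> measure_pmf.prob (multinomial_2N N) {Y. proper 7 N Y (\<lambda>_. 2)}) sequentially"
    using ev1 eventually_gt_at_top[of 0] by eventually_elim (rule prob_bound)
  have ev2: "eventually (\<lambda>N. measure_pmf.prob (multinomial_2N N) {Y. proper 7 N Y (\<lambda>_. 2)} \<le> 1) sequentially"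
    by (simp add: measure_pmf.prob_le_1)
  show "(\<lambda>N. measure_pmf.prob (multinomial_2N N) {Y. proper 7 N Y (\<lambda>_. 2)}) \<longlonglongrightarrow> 1"
    by (rule tendsto_sandwich[OF ev ev2 l tendsto_const])
qed

end
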